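(* Fix $\varepsilon>0$ and integers $2\le a\le b$. (i) Let $n\to\infty$ and $m=m(n)$ with $m/n\to\infty$. Then all hypergraphs $H\in\mathcal{H}(a,n,m)$, except for $o\!\left(\binom{\binom{n}{a}}{m}\right)$ of them, contain no subhypergraph that is rainbow colorable with $b$ colors and has more than $\binom{b}{a}\frac{a!}{b^a}e(H)(1+\varepsilon)$ hyperedges. (ii) For every integer $k\ge 2$ there exists an $a$-uniform hypergraph $H$ of girth greater than $k$ which contains no subhypergraph that is rainbow colorable with $b$ colors and has more than $\binom{b}{a}\frac{a!}{b^a}e(H)(1+\varepsilon)$ hyperedges.
   Context: $\mathcal{H}(a,n,m)$ is the family of all $a$-uniform hypergraphs on vertex set $[n]$ with exactly $m$ hyperedges; $e(H)$ is the number of hyperedges. A subhypergraph consists of a subset of the hyperedges. A coloring of the vertices with $b$ colors is a rainbow (strong) coloring of a hypergraph if in every hyperedge all vertices receive distinct colors. A Berge-cycle of length $l\ge2$ consists of distinct hyperedges $e_1,\dots,e_l$ and distinct vertices $v_1,\dots,v_l$ with $v_i\in e_i\cap e_{i+1}$ (indices mod $l$); the girth of a hypergraph is the length of a shortest Berge-cycle (infinity if none). *)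

theory Defs
  imports "HOL-Analysis.Analysis"
begin

definition uniform_hypergraph :: "nat \<Rightarrow> 'v set set \<Rightarrow> bool" where
  "uniform_hypergraph a H \<longleftrightarrow> finite H \<and> (\<forall>e\<in>H. finite e \<and> card e = a)"

definition hyp_family :: "nat \<Rightarrow> nat \<Rightarrow> nat \<Rightarrow> nat set set set" where
  "hyp_family a n m = {H. H \<subseteq> {e. e \<subseteq> {1..n} \<and> card e = a} \<and> card H = m}"

definition rainbow_colorable :: "nat \<Rightarrow> 'v set set \<Rightarrow> bool" where
  "rainbow_colorable b F \<longleftrightarrow> (\<exists>c :: 'v \<Rightarrow> nat. (\<forall>v. c v < b) \<and> (\<forall>e\<in>F. inj_on c e))"

definition has_berge_cycle :: "'v set set \<Rightarrow> nat \<Rightarrow> bool" where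
  "has_berge_cycle H l \<longleftrightarrow> 2 \<le> l \<and>
     (\<exists>(e :: nat \<Rightarrow> 'v set) (v :: nat \<Rightarrow> 'v).
        inj_on e {..<l} \<and> inj_on v {..<l} \<and> (\<forall>i<l. e i \<in> H) \<and>
        (\<forall>i<l. v i \<in> e i \<and> v i \<in> e ((i + 1) mod l)))"

definition girth_gt :: "'v set set \<Rightarrow> nat \<Rightarrow> bool" where
  "girth_gt H k \<longleftrightarrow> (\<forall>l. l \<le> k \<longrightarrow> \<not> has_berge_cycle H l)"

definition has_large_rainbow_sub :: "nat \<Rightarrow> real \<Rightarrow> 'v set set \<Rightarrow> bool" where
  "has_large_rainbow_sub b t H \<longleftrightarrow> (\<exists>F\<subseteq>H. rainbow_colorable b F \<and> real (card F) > t)"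

definition rb_const :: "nat \<Rightarrow> nat \<Rightarrow> real" where
  "rb_const a b = real (b choose a) * fact a / real b ^ a"

end

theory Submission
  imports Defs
begin


lemma key_bern:
  fixes y x :: real and B a :: nat
  assumes "y \<ge> 0" "x \<ge> 0" "a \<ge> 1" "B \<ge> 1"
  shows "real B ^ (a - 1) * y ^ (a - 1) * ((real B - real a) * y + real a * x) \<le> ((real B - 1) * y + x) ^ a"
proof (cases "y = 0")
  case True
  then show ?thesis using assms
    by (cases "a = 1") (auto simp: zero_power)
next
  case False
  hence yp: "y > 0" using assms by auto
  define z where "z = (x - y) / (real B * y)"
  have Bp: "real B > 0" using assms by auto
  have "real B * y \<ge> 1 * y" by (rule mult_right_mono) (use yp assms in auto)
  hence "x - y \<ge> -(real B * y)" using assms by linarith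
  hence z1: "-1 \<le> z" unfolding z_def using yp Bp
    by (simp add: field_simps)
  have e1: "(real B - 1) * y + x = real B * y * (1 + z)" unfolding z_def using yp Bp
    by (simp add: field_simps)
  have e2: "real B ^ (a - 1) * y ^ (a - 1) * ((real B - real a) * y + real a * x)
       = (real B * y) ^ a * (1 + real a * z)"
  proof -
    have p: "(real B * y) ^ a = (real B * y) ^ (a - 1) * (real B * y)"
      using power_minus_mult[of a "real B * y"] assms(3) by simp
    have q: "real B * y * (1 + real a * z) = (real B - real a) * y + real a * x"
      unfolding z_def using yp Bp by (simp add: field_simps)
    have "(real B * y) ^ a * (1 + real a * z) = (real B * y) ^ (a - 1) * (real B * y * (1 + real a * z))"
      by (subst p) (simp only: mult.assoc)
    also have "\<dots> = real B ^ (a - 1) * y ^ (a - 1) * ((real B - real a) * y + real a * x)"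
      by (simp only: q power_mult_distrib)
    finally show ?thesis by simp
  qed
  have "(real B * y) ^ a * (1 + real a * z) \<le> (real B * y) ^ a * (1 + z) ^ a"
    by (rule mult_left_mono[OF Bernoulli_inequality[OF z1]]) (use yp Bp in auto)
  also have "\<dots> = ((real B - 1) * y + x) ^ a" by (simp add: e1 power_mult_distrib)
  finally show ?thesis using e2 by simp
qed

lemma key_binom:
  fixes y x :: real and b a :: nat
  assumes y: "y \<ge> 0" and x: "x \<ge> 0" and a: "a \<ge> 1"
  shows "real (b choose a) * y ^ a + x * real (b choose (a - 1)) * y ^ (a - 1)
         \<le> real (Suc b choose a) * (real b * y + x) ^ a / real (Suc b) ^ a"
proof (cases "a \<le> Suc b")
  case False
  hence z: "b choose a = 0" "b choose (a - 1) = 0" by (simp_all add: binomial_eq_0)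
  show ?thesis unfolding z using x y by simp
next
  case True
  define B where "B = Suc b"
  have h1: "real (B - a) * real (B choose a) = real B * real (b choose a)"
    using binomial_absorb_comp[of B a] unfolding B_def by (simp only: diff_Suc_1 of_nat_mult[symmetric])
  have h2: "real a * real (B choose a) = real B * real (b choose (a - 1))"
    using binomial_absorption[of "a - 1" B] a unfolding B_def by (simp only: Suc_diff_1[OF order.strict_trans2[OF zero_less_one a]] diff_Suc_1 of_nat_mult[symmetric])
  have Bp: "real B > 0" unfolding B_def by simp
  have aB: "real (B - a) = real B - real a" using True unfolding B_def by simp
  have c1: "real (b choose a) = real (B choose a) * (real B - real a) / real B"
    using h1 aB Bp by (simp add: field_simps)
  have c2: "real (b choose (a - 1)) = real (B choose a) * real a / real B"
    using h2 Bp by (simp add: field_simps)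
  have ya: "y ^ a = y ^ (a - 1) * y" using power_minus_mult[of a y] a by simp
  have Ba: "real B ^ a = real B ^ (a - 1) * real B" using power_minus_mult[of a "real B"] a by simp
  have Bap: "real B ^ a > 0" using Bp by simp
  have "real (b choose a) * y ^ a + x * real (b choose (a - 1)) * y ^ (a - 1)
     = real (B choose a) / real B ^ a * (real B ^ (a - 1) * y ^ (a - 1) * ((real B - real a) * y + real a * x))"
    unfolding c1 c2 ya using Ba Bp by (simp add: field_simps)
  also have "\<dots> \<le> real (B choose a) / real B ^ a * ((real B - 1) * y + x) ^ a"
    by (rule mult_left_mono[OF key_bern]) (use x y a Bap B_def in auto)
  also have "\<dots> = real (Suc b choose a) * (real b * y + x) ^ a / real (Suc b) ^ a"
    unfolding B_def by simp
  finally show ?thesis .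
qed

definition Rb :: "('v \<Rightarrow> nat) \<Rightarrow> 'v set \<Rightarrow> nat \<Rightarrow> 'v set set" where
  "Rb c W k = {e. e \<subseteq> W \<and> card e = k \<and> inj_on c e}"

lemma Rb_finite: "finite W \<Longrightarrow> finite (Rb c W k)"
  unfolding Rb_def by (rule finite_subset[of _ "Pow W"]) auto

lemma Rb_empty: "k \<ge> 1 \<Longrightarrow> Rb c {} k = {}"
  unfolding Rb_def by auto

lemma Rb_zero: "finite W \<Longrightarrow> Rb c W 0 = {{}}"
  unfolding Rb_def by (auto dest: finite_subset)

lemma rainbow_count:
  fixes c :: "'v \<Rightarrow> nat"
  assumes "finite V" "\<forall>v\<in>V. c v < b"
  shows "real (card (Rb c V a)) * real b ^ a \<le> real (b choose a) * real (card V) ^ a"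
  using assms
proof (induction b arbitrary: V a)
  case 0
  hence V: "V = {}" by auto
  show ?case
  proof (cases "a = 0")
    case True thus ?thesis using V Rb_zero[of "{}" c] by simp
  next
    case False thus ?thesis using V Rb_empty[of a c] by simp
  qed
next
  case (Suc b)
  show ?case
  proof (cases "a = 0")
    case True thus ?thesis using Rb_zero[OF Suc.prems(1), of c] by simp
  next
    case False
    hence a1: "a \<ge> 1" by simp
    define V' where "V' = {v\<in>V. c v < b}"
    define X where "X = {v\<in>V. c v = b}"
    have fV': "finite V'" "finite X" using Suc.prems(1) unfolding V'_def X_def by auto
    have VU: "V = V' \<union> X" "V' \<inter> X = {}" using Suc.prems(2) unfolding V'_def X_def by auto
    hence cardV: "card V = card V' + card X" using fV' by (simp add: card_Un_disjoint)
    have sub: "Rb c V a \<subseteq> Rb c V' a \<union> (\<Union>x\<in>X. insert x ` Rb c V' (a - 1))"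
    proof
      fix e assume e: "e \<in> Rb c V a"
      hence eV: "e \<subseteq> V" and ca: "card e = a" and inj: "inj_on c e" unfolding Rb_def by auto
      show "e \<in> Rb c V' a \<union> (\<Union>x\<in>X. insert x ` Rb c V' (a - 1))"
      proof (cases "e \<inter> X = {}")
        case True
        hence "e \<subseteq> V'" using eV VU by auto
        thus ?thesis using ca inj unfolding Rb_def by auto
      next
        case False
        then obtain x where x: "x \<in> e" "x \<in> X" by auto
        have fe: "finite e" using eV Suc.prems(1) finite_subset by auto
        have "e - {x} \<subseteq> V'"
        proof
          fix v assume v: "v \<in> e - {x}"
          hence "c v \<noteq> c x" using inj x(1) by (auto dest: inj_onD)
          moreover have "c x = b" using x unfolding X_def by auto
          moreover have "c v < Suc b" "v \<in> V" using v eV Suc.prems(2) by auto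
          ultimately show "v \<in> V'" unfolding V'_def by auto
        qed
        moreover have "card (e - {x}) = a - 1" using ca x fe by simp
        moreover have "inj_on c (e - {x})" using inj by (rule inj_on_subset) auto
        ultimately have "e - {x} \<in> Rb c V' (a - 1)" unfolding Rb_def by auto
        moreover have "e = insert x (e - {x})" using x by auto
        ultimately show ?thesis using x by blast
      qed
    qed
    define A where "A = real (card (Rb c V' a))"
    define Bc where "Bc = real (card (Rb c V' (a - 1)))"
    define n' where "n' = real (card V')"
    define x where "x = real (card X)"
    have cnt: "real (card (Rb c V a)) \<le> A + x * Bc"
    proof -
      have "card (Rb c V a) \<le> card (Rb c V' a \<union> (\<Union>x\<in>X. insert x ` Rb c V' (a - 1)))"
        by (rule card_mono) (use sub fV' Rb_finite in auto)
      also have "\<dots> \<le> card (Rb c V' a) + card (\<Union>x\<in>X. insert x ` Rb c V' (a - 1))"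
        by (rule card_Un_le)
      also have "card (\<Union>x\<in>X. insert x ` Rb c V' (a - 1)) \<le> (\<Sum>x\<in>X. card (insert x ` Rb c V' (a - 1)))"
        by (rule card_UN_le[OF fV'(2)])
      also have "\<dots> \<le> (\<Sum>x\<in>X. card (Rb c V' (a - 1)))"
        by (rule sum_mono) (rule card_image_le, rule Rb_finite, rule fV'(1))
      also have "\<dots> = card X * card (Rb c V' (a - 1))" by simp
      finally have "card (Rb c V a) \<le> card (Rb c V' a) + card X * card (Rb c V' (a - 1))" by simp
      hence "real (card (Rb c V a)) \<le> real (card (Rb c V' a) + card X * card (Rb c V' (a - 1)))"
        by (simp only: of_nat_le_iff)
      thus ?thesis unfolding A_def Bc_def x_def by simp
    qed
    have IH1: "A * real b ^ a \<le> real (b choose a) * n' ^ a"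
      unfolding A_def n'_def by (rule Suc.IH[OF fV'(1)]) (auto simp: V'_def)
    have IH2: "Bc * real b ^ (a - 1) \<le> real (b choose (a - 1)) * n' ^ (a - 1)"
      unfolding Bc_def n'_def by (rule Suc.IH[OF fV'(1)]) (auto simp: V'_def)
    have x0: "x \<ge> 0" "n' \<ge> 0" "A \<ge> 0" "Bc \<ge> 0" unfolding x_def n'_def A_def Bc_def by auto
    have cV: "real (card V) = n' + x" unfolding n'_def x_def cardV by simp
    show ?thesis
    proof (cases "b = 0")
      case True
      hence V'e: "V' = {}" unfolding V'_def by auto
      hence A0: "A = 0" unfolding A_def using Rb_empty[OF a1, of c] by simp
      show ?thesis
      proof (cases "a = 1")
        case True
        have "Bc = 1" unfolding Bc_def True V'e using Rb_zero[of "{}" c] by simp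
        thus ?thesis using cnt A0 True \<open>b = 0\<close> V'e cV by (simp add: n'_def)
      next
        case False
        hence "a - 1 \<ge> 1" using a1 by simp
        hence "Bc = 0" unfolding Bc_def V'e using Rb_empty[of "a - 1" c] by simp
        thus ?thesis using cnt A0 \<open>b = 0\<close> by simp
      qed
    next
      case False
      hence bp: "real b > 0" by simp
      define y where "y = n' / real b"
      have y0: "y \<ge> 0" unfolding y_def using x0 bp by simp
      have n'y: "n' = real b * y" unfolding y_def using bp by simp
      have A': "A \<le> real (b choose a) * y ^ a"
        using IH1 bp unfolding n'y by (simp add: power_mult_distrib field_simps mult.commute mult.left_commute)
      have B': "Bc \<le> real (b choose (a - 1)) * y ^ (a - 1)"
        using IH2 bp unfolding n'y by (simp add: power_mult_distrib field_simps mult.commute mult.left_commute)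
      have "real (card (Rb c V a)) \<le> real (b choose a) * y ^ a + x * (real (b choose (a - 1)) * y ^ (a - 1))"
        using cnt A' mult_left_mono[OF B' x0(1)] by linarith
      also have "\<dots> \<le> real (Suc b choose a) * (real b * y + x) ^ a / real (Suc b) ^ a"
        using key_binom[OF y0 x0(1) a1, of b] by (simp add: mult.assoc)
      finally show ?thesis using cV n'y by (simp add: field_simps)
    qed
  qed
qed



lemma binom_ratio:
  fixes N m s :: nat
  assumes "s \<le> m" "m \<le> N"
  shows "real (N - s choose (m - s)) * real N ^ s \<le> real (N choose m) * real m ^ s"
  using assms
proof (induction s)
  case 0 thus ?case by simp
next
  case (Suc s)
  define N1 where "N1 = N - s"
  define m1 where "m1 = m - s"
  have m1p: "m1 \<ge> 1" "N1 \<ge> m1" using Suc.prems unfolding N1_def m1_def by auto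
  have IH: "real (N1 choose m1) * real N ^ s \<le> real (N choose m) * real m ^ s"
    using Suc.IH Suc.prems unfolding N1_def m1_def by simp
  have abs: "real m1 * real (N1 choose m1) = real N1 * real (N1 - 1 choose (m1 - 1))"
    using binomial_absorption[of "m1 - 1" N1] m1p by (simp only: Suc_diff_1[OF order.strict_trans2[OF zero_less_one m1p(1)]] of_nat_mult[symmetric])
  have N1p: "real N1 > 0" using m1p by simp
  have e: "N - Suc s = N1 - 1" "m - Suc s = m1 - 1" unfolding N1_def m1_def by auto
  have c: "real (N1 - 1 choose (m1 - 1)) = real m1 * real (N1 choose m1) / real N1"
    using abs N1p by (simp add: field_simps)
  have r: "real m1 * real N \<le> real m * real N1"
  proof -
    have e1: "real m1 = real m - real s" "real N1 = real N - real s" using Suc.prems unfolding m1_def N1_def by auto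
    have "real s * real m \<le> real s * real N" using Suc.prems by (simp add: mult_left_mono)
    moreover have "real N * real m1 = real N * real m - real N * real s" unfolding e1 by (simp add: right_diff_distrib)
    moreover have "real N1 * real m = real N * real m - real s * real m" unfolding e1 by (simp add: left_diff_distrib)
    ultimately show ?thesis by (simp add: mult.commute)
  qed
  have "real (N - Suc s choose (m - Suc s)) * real N ^ Suc s
      = (real m1 * real N / real N1) * (real (N1 choose m1) * real N ^ s)"
    unfolding e c by (simp add: field_simps)
  also have "\<dots> \<le> real m * (real (N choose m) * real m ^ s)"
  proof (rule mult_mono)
    show "real m1 * real N / real N1 \<le> real m" using r N1p by (simp add: field_simps)
  qed (use IH in auto)
  also have "\<dots> = real (N choose m) * real m ^ Suc s" by simp
  finally show ?case .
qed

lemma sup_count: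
  assumes fU: "finite U" and SU: "S \<subseteq> U"
  shows "real (card {H. H \<subseteq> U \<and> card H = m \<and> S \<subseteq> H}) \<le> real (card U choose m) * (real m / real (card U)) ^ card S"
proof (cases "card S \<le> m \<and> m \<le> card U")
  case False
  have fS: "finite S" using fU SU finite_subset by auto
  have E: "{H. H \<subseteq> U \<and> card H = m \<and> S \<subseteq> H} = {}"
  proof (rule ccontr)
    assume "{H. H \<subseteq> U \<and> card H = m \<and> S \<subseteq> H} \<noteq> {}"
    then obtain H where H: "H \<subseteq> U" "card H = m" "S \<subseteq> H" by auto
    have "card S \<le> card H" using H fU by (meson card_mono finite_subset)
    moreover have "card H \<le> card U" using card_mono[OF fU H(1)] .
    ultimately show False using False H by auto
  qed
  show ?thesis by (simp add: E)
next
  case True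
  have fS: "finite S" using fU SU finite_subset by auto
  have "{H. H \<subseteq> U \<and> card H = m \<and> S \<subseteq> H} \<subseteq> (\<lambda>A. A \<union> S) ` {A. A \<subseteq> U - S \<and> card A = m - card S}"
  proof
    fix H assume H: "H \<in> {H. H \<subseteq> U \<and> card H = m \<and> S \<subseteq> H}"
    hence "H = (H - S) \<union> S" "H - S \<subseteq> U - S" by auto
    moreover have "card (H - S) = m - card S" using H fS by (auto simp: card_Diff_subset)
    ultimately show "H \<in> (\<lambda>A. A \<union> S) ` {A. A \<subseteq> U - S \<and> card A = m - card S}" by blast
  qed
  hence "card {H. H \<subseteq> U \<and> card H = m \<and> S \<subseteq> H} \<le> card ((\<lambda>A. A \<union> S) ` {A. A \<subseteq> U - S \<and> card A = m - card S})"
    by (intro card_mono finite_imageI) (use fU in auto)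
  also have "\<dots> \<le> card {A. A \<subseteq> U - S \<and> card A = m - card S}" by (rule card_image_le) (use fU in auto)
  also have "\<dots> = (card U - card S) choose (m - card S)" using fU SU by (simp add: n_subsets card_Diff_subset fS)
  finally have c: "real (card {H. H \<subseteq> U \<and> card H = m \<and> S \<subseteq> H}) \<le> real (card U - card S choose (m - card S))"
    by (simp only: of_nat_le_iff)
  show ?thesis
  proof (cases "card S = 0")
    case True
    thus ?thesis using c by simp
  next
    case False
    hence Up: "real (card U) > 0" using True by simp
    have "real (card U - card S choose (m - card S)) \<le> real (card U choose m) * real m ^ card S / real (card U) ^ card S"
      using binom_ratio[of "card S" m "card U"] True Up by (simp add: field_simps)
    thus ?thesis using c by (simp add: power_divide)
  qed
qed

lemma pow_as_sum:
  fixes z :: real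
  assumes "finite A"
  shows "(1 + z) ^ card A = (\<Sum>S\<in>Pow A. z ^ card S)"
proof -
  have "(\<Prod>x\<in>A. z + 1) = (\<Sum>X\<in>Pow A. (\<Prod>x\<in>X. z) * (\<Prod>x\<in>A-X. 1))"
    by (rule prod_add[OF assms])
  thus ?thesis by (simp add: add.commute)
qed

lemma mgf_bound:
  fixes lam :: real and U :: "'a set"
  assumes fU: "finite U" and RU: "R \<subseteq> U" and lam: "lam \<ge> 1"
  shows "(\<Sum>H\<in>{H. H \<subseteq> U \<and> card H = m}. lam ^ card (H \<inter> R))
         \<le> real (card U choose m) * (1 + (lam - 1) * real m / real (card U)) ^ card R"
proof -
  define F where "F = {H. H \<subseteq> U \<and> card H = m}"
  define g where "g = (\<lambda>S::'a set. (lam - 1) ^ card S)"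
  have fR: "finite R" using fU RU finite_subset by auto
  have fF: "finite F" unfolding F_def by (rule finite_subset[of _ "Pow U"]) (use fU in auto)
  have g0: "\<And>S. g S \<ge> 0" unfolding g_def using lam by simp
  have step1: "\<And>H. lam ^ card (H \<inter> R) = (\<Sum>S\<in>Pow R. if S \<subseteq> H then g S else 0)"
  proof -
    fix H
    have "lam ^ card (H \<inter> R) = (1 + (lam - 1)) ^ card (H \<inter> R)" by simp
    also have "\<dots> = (\<Sum>S\<in>Pow (H \<inter> R). g S)" unfolding g_def by (rule pow_as_sum) (use fR in auto)
    also have "Pow (H \<inter> R) = {S\<in>Pow R. S \<subseteq> H}" by auto
    also have "(\<Sum>S\<in>{S\<in>Pow R. S \<subseteq> H}. g S) = (\<Sum>S\<in>Pow R. if S \<subseteq> H then g S else 0)"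
      by (rule sum.inter_filter) (use fR in auto)
    finally show "lam ^ card (H \<inter> R) = (\<Sum>S\<in>Pow R. if S \<subseteq> H then g S else 0)" .
  qed
  have "(\<Sum>H\<in>F. lam ^ card (H \<inter> R)) = (\<Sum>H\<in>F. \<Sum>S\<in>Pow R. if S \<subseteq> H then g S else 0)"
    using step1 by simp
  also have "\<dots> = (\<Sum>S\<in>Pow R. \<Sum>H\<in>F. if S \<subseteq> H then g S else 0)" by (rule sum.swap)
  also have "\<dots> = (\<Sum>S\<in>Pow R. g S * real (card {H\<in>F. S \<subseteq> H}))"
  proof (rule sum.cong[OF refl])
    fix S
    have "(\<Sum>H\<in>F. if S \<subseteq> H then g S else 0) = (\<Sum>H\<in>{H\<in>F. S \<subseteq> H}. g S)"
      by (rule sum.inter_filter[symmetric]) (rule fF)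
    thus "(\<Sum>H\<in>F. if S \<subseteq> H then g S else 0) = g S * real (card {H\<in>F. S \<subseteq> H})" by simp
  qed
  also have "\<dots> \<le> (\<Sum>S\<in>Pow R. g S * (real (card U choose m) * (real m / real (card U)) ^ card S))"
  proof (rule sum_mono)
    fix S assume "S \<in> Pow R"
    hence SU: "S \<subseteq> U" using RU by auto
    have "{H\<in>F. S \<subseteq> H} = {H. H \<subseteq> U \<and> card H = m \<and> S \<subseteq> H}" unfolding F_def by auto
    thus "g S * real (card {H\<in>F. S \<subseteq> H}) \<le> g S * (real (card U choose m) * (real m / real (card U)) ^ card S)"
      using sup_count[OF fU SU, of m] g0 by (simp add: mult_left_mono)
  qed
  also have "\<dots> = real (card U choose m) * (\<Sum>S\<in>Pow R. ((lam - 1) * (real m / real (card U))) ^ card S)"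
    unfolding g_def sum_distrib_left power_mult_distrib by (rule sum.cong[OF refl]) (simp only: mult_ac)
  also have "\<dots> = real (card U choose m) * (1 + (lam - 1) * real m / real (card U)) ^ card R"
    using pow_as_sum[OF fR, of "(lam - 1) * (real m / real (card U))"] by simp
  finally show ?thesis unfolding F_def .
qed

lemma tail_bound:
  fixes lam t :: real
  assumes fU: "finite U" and RU: "R \<subseteq> U" and lam: "lam \<ge> 1"
  shows "real (card {H. H \<subseteq> U \<and> card H = m \<and> real (card (H \<inter> R)) > t})
         \<le> real (card U choose m) * exp (- t * ln lam + (lam - 1) * real m / real (card U) * real (card R))"
proof -
  define F where "F = {H. H \<subseteq> U \<and> card H = m}"
  define Bd where "Bd = {H. H \<subseteq> U \<and> card H = m \<and> real (card (H \<inter> R)) > t}"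
  have fF: "finite F" unfolding F_def by (rule finite_subset[of _ "Pow U"]) (use fU in auto)
  have BF: "Bd \<subseteq> F" unfolding Bd_def F_def by auto
  have lp: "lam > 0" using lam by simp
  have "real (card Bd) * exp (t * ln lam) = (\<Sum>H\<in>Bd. exp (t * ln lam))" by simp
  also have "\<dots> \<le> (\<Sum>H\<in>Bd. lam ^ card (H \<inter> R))"
  proof (rule sum_mono)
    fix H assume "H \<in> Bd"
    hence "t \<le> real (card (H \<inter> R))" unfolding Bd_def by auto
    hence "exp (t * ln lam) \<le> exp (real (card (H \<inter> R)) * ln lam)"
      using lam by (simp add: mult_right_mono)
    also have "\<dots> = lam ^ card (H \<inter> R)" using lp by (simp add: exp_of_nat_mult)
    finally show "exp (t * ln lam) \<le> lam ^ card (H \<inter> R)" .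
  qed
  also have "\<dots> \<le> (\<Sum>H\<in>F. lam ^ card (H \<inter> R))"
    by (rule sum_mono2[OF fF BF]) (use lam in auto)
  also have "\<dots> \<le> real (card U choose m) * (1 + (lam - 1) * real m / real (card U)) ^ card R"
    unfolding F_def by (rule mgf_bound[OF fU RU lam])
  also have "\<dots> \<le> real (card U choose m) * exp ((lam - 1) * real m / real (card U) * real (card R))"
  proof (rule mult_left_mono)
    have "(1 + (lam - 1) * real m / real (card U)) ^ card R \<le> exp ((lam - 1) * real m / real (card U)) ^ card R"
      by (rule power_mono) (use lam in \<open>auto simp: exp_ge_add_one_self\<close>)
    also have "\<dots> = exp ((lam - 1) * real m / real (card U) * real (card R))"
      by (simp add: exp_of_nat_mult[symmetric] mult.commute)
    finally show "(1 + (lam - 1) * real m / real (card U)) ^ card R \<le> exp ((lam - 1) * real m / real (card U) * real (card R))" .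
  qed simp
  finally have "real (card Bd) * exp (t * ln lam) \<le> real (card U choose m) * exp ((lam - 1) * real m / real (card U) * real (card R))" .
  hence "real (card Bd) \<le> real (card U choose m) * exp ((lam - 1) * real m / real (card U) * real (card R)) / exp (t * ln lam)"
    by (simp add: field_simps)
  also have "\<dots> = real (card U choose m) * exp (- t * ln lam + (lam - 1) * real m / real (card U) * real (card R))"
    by (simp add: exp_diff)
  finally show ?thesis unfolding Bd_def .
qed



definition Ue :: "nat \<Rightarrow> nat \<Rightarrow> nat set set" where
  "Ue n a = {e. e \<subseteq> {1..n} \<and> card e = a}"

lemma Ue_finite: "finite (Ue n a)"
  unfolding Ue_def by (rule finite_subset[of _ "Pow {1..n}"]) auto

lemma Ue_card: "card (Ue n a) = n choose a"
  unfolding Ue_def using n_subsets[of "{1..n}" a] by simp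

lemma hyp_family_Ue: "hyp_family a n m = {H. H \<subseteq> Ue n a \<and> card H = m}"
  unfolding hyp_family_def Ue_def by simp

lemma rb_pos: "1 \<le> a \<Longrightarrow> a \<le> b \<Longrightarrow> rb_const a b > 0"
  unfolding rb_const_def by (simp add: zero_less_binomial_iff)

lemma exponent_bound:
  fixes u rb m N R t :: real
  assumes u: "0 < u" "u \<le> 1/4" and rb: "rb > 0" and m: "m \<ge> 0" and N: "N > 0"
    and R: "R \<le> rb * (1 + u) * N" and t: "t \<ge> rb * (1 + 4 * u) * m"
  shows "- t * ln (1 + u) + u * m / N * R \<le> - rb * u^2 * m"
proof -
  have l: "ln (1 + u) \<ge> u - u^2" using ln_one_plus_pos_lower_bound[of u] u by simp
  have l0: "u - u^2 \<ge> 0" using u by (simp add: power2_eq_square mult_right_le_one_le)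
  have "t * ln (1 + u) \<ge> rb * (1 + 4 * u) * m * (u - u^2)"
    by (rule mult_mono[OF t l]) (use l0 l rb m u t in \<open>auto intro!: order.trans[OF _ t]\<close>)
  moreover have "u * m / N * R \<le> u * m / N * (rb * (1 + u) * N)"
    by (rule mult_left_mono[OF R]) (use u m N in auto)
  moreover have "u * m / N * (rb * (1 + u) * N) = rb * m * (u + u^2)"
    using N by (simp add: field_simps power2_eq_square)
  moreover have "rb * (1 + 4 * u) * m * (u - u^2) = rb * m * (u + 3 * u^2 - 4 * u^3)"
    by (simp add: field_simps power2_eq_square power3_eq_cube)
  moreover have "rb * m * (u + u^2) - rb * m * (u + 3 * u^2 - 4 * u^3) \<le> - rb * u^2 * m"
  proof -
    have "4 * u^3 \<le> u^2" using u by (simp add: power2_eq_square power3_eq_cube)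
    hence "(u + u^2) - (u + 3 * u^2 - 4 * u^3) \<le> -(u^2)" by simp
    hence "rb * m * ((u + u^2) - (u + 3 * u^2 - 4 * u^3)) \<le> rb * m * (-(u^2))"
      by (rule mult_left_mono) (use rb m in auto)
    thus ?thesis by (simp add: algebra_simps)
  qed
  ultimately show ?thesis by linarith
qed

lemma bad_rainbow_bound:
  fixes e1 t :: real and a b n m :: nat
  assumes a: "1 \<le> a" "a \<le> b" and e1: "0 < e1" "e1 \<le> 1"
    and rho: "real n ^ a \<le> (1 + e1/4) * fact a * real (n choose a)"
    and Np: "n choose a > 0"
    and t: "t \<ge> rb_const a b * (1 + e1) * real m"
  shows "real (card {H \<in> hyp_family a n m. has_large_rainbow_sub b t H})
         \<le> real ((n choose a) choose m) * real b ^ n * exp (- rb_const a b * (e1/4)^2 * real m)"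
proof -
  define u where "u = e1 / 4"
  define rb where "rb = rb_const a b"
  define U where "U = Ue n a"
  define N where "N = real (n choose a)"
  define Col where "Col = (\<Pi>\<^sub>E v\<in>{1..n}. {..<b})"
  define RC where "RC = (\<lambda>c::nat \<Rightarrow> nat. {e \<in> U. inj_on c e})"
  define BC where "BC = (\<lambda>c. {H. H \<subseteq> U \<and> card H = m \<and> real (card (H \<inter> RC c)) > t})"
  have fU: "finite U" unfolding U_def by (rule Ue_finite)
  have cU: "card U = n choose a" unfolding U_def by (rule Ue_card)
  have fCol: "finite Col" unfolding Col_def by (simp add: finite_PiE)
  have cCol: "card Col = b ^ n" unfolding Col_def by (simp add: card_PiE)
  have rbp: "rb > 0" unfolding rb_def using a by (rule rb_pos)
  have Npos: "N > 0" unfolding N_def using Np by simp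
  have bp: "real b > 0" using a by simp
  have sub: "{H \<in> hyp_family a n m. has_large_rainbow_sub b t H} \<subseteq> (\<Union>c\<in>Col. BC c)"
  proof
    fix H assume "H \<in> {H \<in> hyp_family a n m. has_large_rainbow_sub b t H}"
    hence HU: "H \<subseteq> U" and Hm: "card H = m" and lr: "has_large_rainbow_sub b t H"
      unfolding hyp_family_Ue U_def by auto
    from lr obtain F c0 where F: "F \<subseteq> H" "\<forall>v. c0 v < b" "\<forall>e\<in>F. inj_on c0 e" "real (card F) > t"
      unfolding has_large_rainbow_sub_def rainbow_colorable_def by blast
    define c where "c = restrict c0 {1..n}"
    have cC: "c \<in> Col" unfolding c_def Col_def using F(2) by auto
    have "F \<subseteq> H \<inter> RC c"
    proof
      fix e assume eF: "e \<in> F"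
      hence eU: "e \<in> U" using F HU by auto
      hence "e \<subseteq> {1..n}" unfolding U_def Ue_def by auto
      hence "inj_on c e = inj_on c0 e" unfolding c_def by (intro inj_on_cong) auto
      thus "e \<in> H \<inter> RC c" using eF F eU unfolding RC_def by auto
    qed
    moreover have "finite H" using HU fU finite_subset by auto
    ultimately have "card F \<le> card (H \<inter> RC c)" by (simp add: card_mono)
    hence "real (card (H \<inter> RC c)) > t" using F(4) by linarith
    thus "H \<in> (\<Union>c\<in>Col. BC c)" using cC HU Hm unfolding BC_def by auto
  qed
  have each: "real (card (BC c)) \<le> real ((n choose a) choose m) * exp (- rb * u^2 * real m)" if cC: "c \<in> Col" for c
  proof -
    have RU: "RC c \<subseteq> U" unfolding RC_def by auto
    have RCeq: "RC c = Rb c {1..n} a" unfolding RC_def U_def Ue_def Rb_def by auto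
    have cb: "\<forall>v\<in>{1..n}. c v < b" using cC unfolding Col_def by auto
    have cnt: "real (card (RC c)) * real b ^ a \<le> real (b choose a) * real n ^ a"
      using rainbow_count[of "{1..n}" c b a] cb unfolding RCeq by simp
    have R: "real (card (RC c)) \<le> rb * (1 + u) * N"
    proof -
      have "real (card (RC c)) \<le> real (b choose a) * real n ^ a / real b ^ a"
        using cnt bp by (simp add: field_simps)
      also have "\<dots> \<le> real (b choose a) * ((1 + u) * fact a * N) / real b ^ a"
        using rho bp unfolding u_def N_def by (intro divide_right_mono mult_left_mono) auto
      also have "\<dots> = rb * (1 + u) * N" unfolding rb_def rb_const_def by (simp add: field_simps)
      finally show ?thesis .
    qed
    have u: "0 < u" "u \<le> 1/4" unfolding u_def using e1 by auto
    have tt: "t \<ge> rb * (1 + 4 * u) * real m" using t unfolding rb_def u_def by simp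
    have "real (card (BC c)) \<le> real (card U choose m) * exp (- t * ln (1 + u) + (1 + u - 1) * real m / real (card U) * real (card (RC c)))"
      unfolding BC_def by (rule tail_bound[OF fU RU]) (use u in auto)
    also have "\<dots> \<le> real (card U choose m) * exp (- rb * u^2 * real m)"
    proof -
      have "- t * ln (1 + u) + (1 + u - 1) * real m / real (card U) * real (card (RC c))
          = - t * ln (1 + u) + u * real m / N * real (card (RC c))" unfolding N_def cU by simp
      also have "\<dots> \<le> - rb * u^2 * real m"
        by (rule exponent_bound[OF u rbp _ Npos R tt]) simp
      finally have "- t * ln (1 + u) + (1 + u - 1) * real m / real (card U) * real (card (RC c)) \<le> - rb * u^2 * real m" .
      thus ?thesis by (intro mult_left_mono) auto
    qed
    finally show ?thesis unfolding cU .
  qed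
  have "real (card {H \<in> hyp_family a n m. has_large_rainbow_sub b t H}) \<le> real (card (\<Union>c\<in>Col. BC c))"
  proof -
    have "finite (\<Union>c\<in>Col. BC c)"
      by (rule finite_subset[of _ "Pow U"]) (use fU in \<open>auto simp: BC_def\<close>)
    hence "card {H \<in> hyp_family a n m. has_large_rainbow_sub b t H} \<le> card (\<Union>c\<in>Col. BC c)"
      using sub by (rule card_mono)
    thus ?thesis by (simp only: of_nat_le_iff)
  qed
  also have "\<dots> \<le> real (\<Sum>c\<in>Col. card (BC c))"
    by (simp only: of_nat_le_iff) (rule card_UN_le[OF fCol])
  also have "\<dots> = (\<Sum>c\<in>Col. real (card (BC c)))" by simp
  also have "\<dots> \<le> (\<Sum>c\<in>Col. real ((n choose a) choose m) * exp (- rb * u^2 * real m))"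
    by (rule sum_mono) (rule each)
  also have "\<dots> = real ((n choose a) choose m) * real b ^ n * exp (- rb * u^2 * real m)"
    using cCol by simp
  finally show ?thesis unfolding rb_def u_def .
qed



lemma falling_lower:
  "a \<le> n \<Longrightarrow> real (n - a) ^ a \<le> fact a * real (n choose a)"
proof (induction a arbitrary: n)
  case 0 thus ?case by simp
next
  case (Suc a)
  then obtain n' where n': "n = Suc n'" by (cases n) auto
  have "a \<le> n'" using Suc.prems n' by simp
  have IH: "real (n' - a) ^ a \<le> fact a * real (n' choose a)" using Suc.IH \<open>a \<le> n'\<close> .
  have "real (n - Suc a) ^ Suc a = real (n' - a) * real (n' - a) ^ a" using n' by simp
  also have "\<dots> \<le> real n * (fact a * real (n' choose a))"
    by (rule mult_mono[OF _ IH]) (use n' in auto)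
  also have "\<dots> = fact (Suc a) * real (n choose Suc a)"
  proof -
    have "Suc a * (n choose Suc a) = n * (n' choose a)" using binomial_absorption[of a n] n' by simp
    hence "real (Suc a) * real (n choose Suc a) = real n * real (n' choose a)" by (metis of_nat_mult)
    hence "fact a * (real (Suc a) * real (n choose Suc a)) = fact a * (real n * real (n' choose a))" by simp
    thus ?thesis by (simp add: algebra_simps)
  qed
  finally show ?case .
qed

lemma rho_eventually:
  fixes u :: real and a :: nat
  assumes "u > 0"
  shows "eventually (\<lambda>n. a \<le> n \<and> real n ^ a \<le> (1 + u) * fact a * real (n choose a)) at_top"
proof -
  have "((\<lambda>n. real a / real n) \<longlongrightarrow> 0) at_top"
    by (rule tendsto_divide_0[OF tendsto_const filterlim_at_top_imp_at_infinity[OF filterlim_real_sequentially]])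
  hence "((\<lambda>n. (1 - real a / real n) ^ a) \<longlongrightarrow> (1 - 0) ^ a) at_top"
    by (intro tendsto_intros)
  hence "eventually (\<lambda>n. (1 - real a / real n) ^ a > 1 / (1 + u)) at_top"
    using assms by (intro order_tendstoD(1)) auto
  moreover have "eventually (\<lambda>n. a < n) at_top" by (rule eventually_gt_at_top)
  ultimately show ?thesis
  proof eventually_elim
    case (elim n)
    hence pos: "real n - real a > 0" "real n > 0" by auto
    have e: "real n ^ a * (1 - real a / real n) ^ a = (real n - real a) ^ a"
      using pos by (simp add: power_mult_distrib[symmetric] field_simps)
    have "real n ^ a * (1 / (1 + u)) \<le> real n ^ a * (1 - real a / real n) ^ a"
      by (rule mult_left_mono) (use elim pos in auto)
    hence "real n ^ a \<le> (1 + u) * (real n - real a) ^ a"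
      unfolding e using assms by (simp add: field_simps)
    also have "(real n - real a) = real (n - a)" using elim by simp
    also have "(1 + u) * real (n - a) ^ a \<le> (1 + u) * (fact a * real (n choose a))"
      by (rule mult_left_mono[OF falling_lower]) (use elim assms in auto)
    finally show ?case using elim by (simp add: mult.assoc)
  qed
qed

lemma has_large_mono: "has_large_rainbow_sub b t H \<Longrightarrow> t' \<le> t \<Longrightarrow> has_large_rainbow_sub b t' H"
  unfolding has_large_rainbow_sub_def by force

lemma part1:
  fixes \<epsilon> :: real and a b :: nat
  assumes eps: "\<epsilon> > 0" and a: "2 \<le> a" "a \<le> b"
  shows "\<forall>m :: nat \<Rightarrow> nat. filterlim (\<lambda>n. real (m n) / real n) at_top at_top \<longrightarrow>
            ((\<lambda>n. real (card {H \<in> hyp_family a n (m n).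
                    has_large_rainbow_sub b (rb_const a b * real (card H) * (1 + \<epsilon>)) H})
                  / real ((n choose a) choose (m n)))
             \<longlonglongrightarrow> 0)"
proof (intro allI impI)
  fix m :: "nat \<Rightarrow> nat"
  assume lim: "filterlim (\<lambda>n. real (m n) / real n) at_top at_top"
  define e1 where "e1 = min \<epsilon> 1"
  define rb where "rb = rb_const a b"
  define \<delta> where "\<delta> = rb * (e1/4)^2"
  have e1: "0 < e1" "e1 \<le> 1" "e1 \<le> \<epsilon>" unfolding e1_def using eps by auto
  have rbp: "rb > 0" unfolding rb_def using a by (intro rb_pos) auto
  have dp: "\<delta> > 0" unfolding \<delta>_def using rbp e1 by simp
  have bp: "real b > 0" using a by simp
  have ev1: "eventually (\<lambda>n. a \<le> n \<and> real n ^ a \<le> (1 + e1/4) * fact a * real (n choose a)) at_top"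
    by (rule rho_eventually) (use e1 in auto)
  have ev2: "eventually (\<lambda>n. (ln (real b) + 1) / \<delta> \<le> real (m n) / real n) at_top"
    using lim unfolding filterlim_at_top by blast
  have ev3: "eventually (\<lambda>n. (1::nat) \<le> n) at_top" by (rule eventually_ge_at_top)
  have g: "(\<lambda>n. exp (-1) ^ n) \<longlonglongrightarrow> (0::real)"
    by (rule LIMSEQ_power_zero) simp
  show "(\<lambda>n. real (card {H \<in> hyp_family a n (m n).
                    has_large_rainbow_sub b (rb_const a b * real (card H) * (1 + \<epsilon>)) H})
                  / real ((n choose a) choose (m n))) \<longlonglongrightarrow> 0"
  proof (rule Lim_null_comparison[OF _ g])
    show "eventually (\<lambda>n. norm (real (card {H \<in> hyp_family a n (m n).
                    has_large_rainbow_sub b (rb_const a b * real (card H) * (1 + \<epsilon>)) H})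
                  / real ((n choose a) choose (m n))) \<le> exp (-1) ^ n) sequentially"
      using ev1 ev2 ev3
    proof eventually_elim
      case (elim n)
      define M where "M = m n"
      define Bad where "Bad = {H \<in> hyp_family a n M. has_large_rainbow_sub b (rb * real M * (1 + \<epsilon>)) H}"
      have eqS: "{H \<in> hyp_family a n (m n). has_large_rainbow_sub b (rb_const a b * real (card H) * (1 + \<epsilon>)) H} = Bad"
        unfolding Bad_def M_def rb_def hyp_family_def by auto
      have Np: "n choose a > 0" using elim by simp
      have tt: "rb * real M * (1 + \<epsilon>) \<ge> rb_const a b * (1 + e1) * real M"
        unfolding rb_def using rbp e1 unfolding rb_def by (simp add: mult_left_mono mult.commute mult.left_commute)
      have cb: "real (card Bad) \<le> real ((n choose a) choose M) * real b ^ n * exp (- \<delta> * real M)"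
        unfolding Bad_def \<delta>_def rb_def using bad_rainbow_bound[OF _ a(2) e1(1) e1(2) _ Np tt] elim a by (simp add: rb_def)
      have ratio: "real (card Bad) / real ((n choose a) choose M) \<le> real b ^ n * exp (- \<delta> * real M)"
      proof (cases "(n choose a) choose M = 0")
        case True
        have z: "real (card Bad) / real ((n choose a) choose M) = 0" using True by (simp only: of_nat_0 div_by_0)
        have "0 \<le> real b ^ n * exp (- \<delta> * real M)" by simp
        thus ?thesis using z by linarith
      next
        case False thus ?thesis using cb by (simp add: field_simps)
      qed
      have np: "real n > 0" using elim by simp
      have "(ln (real b) + 1) / \<delta> * real n \<le> real M / real n * real n"
        using elim np unfolding M_def by (intro mult_right_mono) auto
      hence "(ln (real b) + 1) / \<delta> * real n \<le> real M" using np by simp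
      hence "\<delta> * ((ln (real b) + 1) / \<delta> * real n) \<le> \<delta> * real M" using dp by (intro mult_left_mono) auto
      moreover have "\<delta> * ((ln (real b) + 1) / \<delta> * real n) = real n * (ln (real b) + 1)" using dp by (simp add: field_simps)
      ultimately have dm: "\<delta> * real M \<ge> real n * (ln (real b) + 1)" by simp
      have bn: "real b ^ n = exp (real n * ln (real b))"
        using bp by (simp add: exp_of_nat_mult)
      have "real b ^ n * exp (- \<delta> * real M) = exp (real n * ln (real b) - \<delta> * real M)"
        unfolding bn by (simp add: exp_diff exp_of_nat_mult[symmetric] exp_minus field_simps)
      also have "\<dots> \<le> exp (- real n)" using dm by (simp add: algebra_simps)
      also have "\<dots> = exp (-1) ^ n" by (simp add: exp_of_nat_mult[symmetric])
      finally show ?case using ratio eqS by (simp add: M_def)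
    qed
  qed
qed



definition Wit :: "nat \<Rightarrow> nat \<Rightarrow> nat set set \<Rightarrow> ((nat \<Rightarrow> nat) \<times> (nat \<Rightarrow> nat set)) set" where
  "Wit n l G = {(v, e). v \<in> (\<Pi>\<^sub>E i\<in>{..<l}. {1..n}) \<and> e \<in> (\<Pi>\<^sub>E i\<in>{..<l}. G) \<and>
      inj_on v {..<l} \<and> inj_on e {..<l} \<and> (\<forall>i<l. v i \<in> e i \<and> v i \<in> e ((i + 1) mod l))}"

lemma Wit_finite: "finite G \<Longrightarrow> finite (Wit n l G)"
proof -
  assume fG: "finite G"
  have "Wit n l G \<subseteq> (\<Pi>\<^sub>E i\<in>{..<l}. {1..n}) \<times> (\<Pi>\<^sub>E i\<in>{..<l}. G)" unfolding Wit_def by auto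
  moreover have "finite ((\<Pi>\<^sub>E i\<in>{..<l}. {1..n}) \<times> (\<Pi>\<^sub>E i\<in>{..<l}. G))"
    using fG by (simp add: finite_PiE)
  ultimately show ?thesis by (rule finite_subset)
qed

lemma mod_prev:
  fixes i l :: nat
  assumes il: "i < l"
  shows "((i + l - 1) mod l + 1) mod l = i"
proof (cases i)
  case 0
  have "(l - 1) mod l = l - 1" using il by simp
  thus ?thesis using 0 il by simp
next
  case (Suc j)
  have "(i + l - 1) mod l = j" using Suc il by (simp add: mod_if)
  thus ?thesis using Suc il by simp
qed

lemma mod_prev_ne:
  fixes i l :: nat
  assumes il: "i < l" and l2: "2 \<le> l"
  shows "(i + l - 1) mod l \<noteq> i"
proof (cases i)
  case 0
  thus ?thesis using il l2 by simp
next
  case (Suc j)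
  have "(i + l - 1) mod l = j" using Suc il by (simp add: mod_if)
  thus ?thesis using Suc by simp
qed

lemma pair_count:
  assumes "x \<noteq> y" "x \<in> {1..n}" "y \<in> {1..n}" "2 \<le> a"
  shows "card {f \<in> Ue n a. x \<in> f \<and> y \<in> f} \<le> n ^ (a - 2)"
proof -
  have inj: "inj_on (\<lambda>f. f - {x, y}) {f \<in> Ue n a. x \<in> f \<and> y \<in> f}"
  proof (rule inj_onI)
    fix f g assume "f \<in> {f \<in> Ue n a. x \<in> f \<and> y \<in> f}" "g \<in> {f \<in> Ue n a. x \<in> f \<and> y \<in> f}" "f - {x, y} = g - {x, y}"
    thus "f = g" by blast
  qed
  have img: "(\<lambda>f. f - {x, y}) ` {f \<in> Ue n a. x \<in> f \<and> y \<in> f} \<subseteq> Ue n (a - 2)"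
  proof
    fix g assume "g \<in> (\<lambda>f. f - {x, y}) ` {f \<in> Ue n a. x \<in> f \<and> y \<in> f}"
    then obtain f where f: "f \<in> Ue n a" "x \<in> f" "y \<in> f" "g = f - {x, y}" by auto
    have ff: "finite f" using f(1) unfolding Ue_def by (auto intro: finite_subset)
    have "card g = a - 2" using f ff assms(1) unfolding Ue_def by (simp add: card_Diff_subset)
    thus "g \<in> Ue n (a - 2)" using f unfolding Ue_def by auto
  qed
  have "card {f \<in> Ue n a. x \<in> f \<and> y \<in> f} = card ((\<lambda>f. f - {x, y}) ` {f \<in> Ue n a. x \<in> f \<and> y \<in> f})"
    using inj by (simp add: card_image)
  also have "\<dots> \<le> card (Ue n (a - 2))" by (rule card_mono[OF Ue_finite img])
  also have "\<dots> = n choose (a - 2)" by (rule Ue_card)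
  also have "\<dots> \<le> n ^ (a - 2)"
  proof (cases "a - 2 \<le> n")
    case True thus ?thesis by (rule binomial_le_pow)
  next
    case False thus ?thesis by (simp add: binomial_eq_0)
  qed
  finally show ?thesis .
qed

lemma Wit_card:
  assumes "2 \<le> l" "2 \<le> a"
  shows "card (Wit n l (Ue n a)) \<le> n ^ l * (n ^ (a - 2)) ^ l"
proof -
  define pr where "pr = (\<lambda>i. (i + l - 1) mod l)"
  define Vs where "Vs = {v \<in> (\<Pi>\<^sub>E i\<in>{..<l}. {1..n}). inj_on v {..<l}}"
  define Es where "Es = (\<lambda>v. (\<Pi>\<^sub>E i\<in>{..<l}. {f \<in> Ue n a. v i \<in> f \<and> v (pr i) \<in> f}))"
  have sub: "Wit n l (Ue n a) \<subseteq> Sigma Vs Es"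
  proof
    fix w assume w: "w \<in> Wit n l (Ue n a)"
    then obtain v e where we: "w = (v, e)" by (cases w)
    have props: "v \<in> (\<Pi>\<^sub>E i\<in>{..<l}. {1..n})" "e \<in> (\<Pi>\<^sub>E i\<in>{..<l}. Ue n a)" "inj_on v {..<l}"
      "\<forall>i<l. v i \<in> e i \<and> v i \<in> e ((i + 1) mod l)"
      using w unfolding we Wit_def by auto
    have "e \<in> Es v"
      unfolding Es_def
    proof (rule PiE_I)
      fix i assume i: "i \<in> {..<l}"
      have "pr i < l" unfolding pr_def using i by auto
      hence "v (pr i) \<in> e ((pr i + 1) mod l)" using props(4) by auto
      hence "v (pr i) \<in> e i" unfolding pr_def using mod_prev[of i l] i by auto
      thus "e i \<in> {f \<in> Ue n a. v i \<in> f \<and> v (pr i) \<in> f}" using props i by auto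
    next
      fix i assume "i \<notin> {..<l}" thus "e i = undefined" using props(2) by auto
    qed
    moreover have "v \<in> Vs" unfolding Vs_def using props by auto
    ultimately show "w \<in> Sigma Vs Es" unfolding we by auto
  qed
  have fVs: "finite Vs" unfolding Vs_def by (rule finite_subset[of _ "\<Pi>\<^sub>E i\<in>{..<l}. {1..n}"]) (auto simp: finite_PiE)
  have fEs: "\<And>v. finite (Es v)" unfolding Es_def by (rule finite_PiE) (auto intro: finite_subset[OF _ Ue_finite])
  have cEs: "card (Es v) \<le> (n ^ (a - 2)) ^ l" if v: "v \<in> Vs" for v
  proof -
    have "card (Es v) = (\<Prod>i<l. card {f \<in> Ue n a. v i \<in> f \<and> v (pr i) \<in> f})"
      unfolding Es_def by (simp add: card_PiE)
    also have "\<dots> \<le> (\<Prod>i<l. n ^ (a - 2))"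
    proof (rule prod_mono)
      fix i assume i: "i \<in> {..<l}"
      have pl: "pr i < l" "pr i \<noteq> i" unfolding pr_def using i mod_prev_ne[of i l] assms by auto
      have "v i \<noteq> v (pr i)" using v pl i unfolding Vs_def by (auto dest: inj_onD)
      moreover have "v i \<in> {1..n}" "v (pr i) \<in> {1..n}" using v pl i unfolding Vs_def by (auto simp: PiE_iff)
      ultimately show "0 \<le> card {f \<in> Ue n a. v i \<in> f \<and> v (pr i) \<in> f} \<and> card {f \<in> Ue n a. v i \<in> f \<and> v (pr i) \<in> f} \<le> n ^ (a - 2)"
        using pair_count assms(2) by auto
    qed
    also have "\<dots> = (n ^ (a - 2)) ^ l" by simp
    finally show ?thesis .
  qed
  have "card (Wit n l (Ue n a)) \<le> card (Sigma Vs Es)"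
    by (rule card_mono[OF _ sub]) (use fVs fEs in auto)
  also have "\<dots> = (\<Sum>v\<in>Vs. card (Es v))" using fVs fEs by (simp add: card_SigmaI)
  also have "\<dots> \<le> (\<Sum>v\<in>Vs. (n ^ (a - 2)) ^ l)" by (rule sum_mono) (rule cEs)
  also have "\<dots> = card Vs * (n ^ (a - 2)) ^ l" by simp
  also have "card Vs \<le> n ^ l"
  proof -
    have "card Vs \<le> card (\<Pi>\<^sub>E i\<in>{..<l}. {1..n})" unfolding Vs_def by (rule card_mono) (auto simp: finite_PiE)
    thus ?thesis by (simp add: card_PiE)
  qed
  hence "card Vs * (n ^ (a - 2)) ^ l \<le> n ^ l * (n ^ (a - 2)) ^ l" by simp
  finally show ?thesis .
qed

lemma Wit_sub:
  assumes "H \<subseteq> U"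
  shows "Wit n l H = {w \<in> Wit n l U. snd w ` {..<l} \<subseteq> H}"
  using assms unfolding Wit_def by (auto simp: PiE_iff)

lemma Wit_expect:
  assumes l: "2 \<le> l"
  shows "(\<Sum>H\<in>hyp_family a n m. real (card (Wit n l H)))
        \<le> real (card (Wit n l (Ue n a))) * (real ((n choose a) choose m) * (real m / real (n choose a)) ^ l)"
proof -
  define U where "U = Ue n a"
  define F where "F = hyp_family a n m"
  define WU where "WU = Wit n l U"
  define P where "P = (\<lambda>(w::(nat \<Rightarrow> nat) \<times> (nat \<Rightarrow> nat set)) (H::nat set set). snd w ` {..<l} \<subseteq> H)"
  have fU: "finite U" unfolding U_def by (rule Ue_finite)
  have fF: "finite F" unfolding F_def hyp_family_Ue U_def[symmetric]
    by (rule finite_subset[of _ "Pow U"]) (use fU in auto)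
  have fW: "finite WU" unfolding WU_def by (rule Wit_finite[OF fU])
  have "(\<Sum>H\<in>F. real (card (Wit n l H))) = (\<Sum>H\<in>F. \<Sum>w\<in>WU. if P w H then (1::real) else 0)"
  proof (rule sum.cong[OF refl])
    fix H assume "H \<in> F"
    hence HU: "H \<subseteq> U" unfolding F_def hyp_family_Ue U_def by auto
    have "Wit n l H = {w \<in> WU. P w H}" unfolding WU_def P_def by (rule Wit_sub[OF HU])
    hence "real (card (Wit n l H)) = (\<Sum>w\<in>{w \<in> WU. P w H}. 1)" by simp
    also have "\<dots> = (\<Sum>w\<in>WU. if P w H then (1::real) else 0)" by (rule sum.inter_filter[OF fW])
    finally show "real (card (Wit n l H)) = (\<Sum>w\<in>WU. if P w H then (1::real) else 0)" .
  qed
  also have "\<dots> = (\<Sum>w\<in>WU. \<Sum>H\<in>F. if P w H then (1::real) else 0)" by (rule sum.swap)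
  also have "\<dots> \<le> (\<Sum>w\<in>WU. real ((n choose a) choose m) * (real m / real (n choose a)) ^ l)"
  proof (rule sum_mono)
    fix w assume w: "w \<in> WU"
    obtain v e where we: "w = (v, e)" by (cases w)
    have e: "e \<in> (\<Pi>\<^sub>E i\<in>{..<l}. U)" "inj_on e {..<l}" using w unfolding we WU_def Wit_def by auto
    define S where "S = e ` {..<l}"
    have SU: "S \<subseteq> U" unfolding S_def using e by auto
    have cS: "card S = l" unfolding S_def using e(2) by (simp add: card_image)
    have "(\<Sum>H\<in>F. if P w H then (1::real) else 0) = (\<Sum>H\<in>{H\<in>F. P w H}. (1::real))"
      by (rule sum.inter_filter[symmetric, OF fF])
    also have "\<dots> = real (card {H. H \<subseteq> U \<and> card H = m \<and> S \<subseteq> H})"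
    proof -
      have "{H\<in>F. P w H} = {H. H \<subseteq> U \<and> card H = m \<and> S \<subseteq> H}"
        unfolding F_def hyp_family_Ue U_def[symmetric] P_def S_def we by auto
      thus ?thesis by simp
    qed
    also have "\<dots> \<le> real (card U choose m) * (real m / real (card U)) ^ card S"
      by (rule sup_count[OF fU SU])
    finally show "(\<Sum>H\<in>F. if P w H then (1::real) else 0) \<le> real ((n choose a) choose m) * (real m / real (n choose a)) ^ l"
      unfolding cS U_def Ue_card .
  qed
  also have "\<dots> = real (card (Wit n l (Ue n a))) * (real ((n choose a) choose m) * (real m / real (n choose a)) ^ l)"
    unfolding WU_def U_def by simp
  finally show ?thesis unfolding F_def .
qed

definition Dl :: "nat \<Rightarrow> nat \<Rightarrow> nat set set \<Rightarrow> nat set set" where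
  "Dl n k H = (\<Union>l\<in>{2..k}. (\<lambda>w. snd w 0) ` Wit n l H)"

lemma Dl_card:
  assumes "finite H"
  shows "card (Dl n k H) \<le> (\<Sum>l\<in>{2..k}. card (Wit n l H))"
proof -
  have "card (Dl n k H) \<le> (\<Sum>l\<in>{2..k}. card ((\<lambda>w. snd w 0) ` Wit n l H))"
    unfolding Dl_def by (rule card_UN_le) simp
  also have "\<dots> \<le> (\<Sum>l\<in>{2..k}. card (Wit n l H))"
    by (rule sum_mono) (rule card_image_le[OF Wit_finite[OF assms]])
  finally show ?thesis .
qed

lemma girth_del:
  assumes HU: "H \<subseteq> Ue n a"
  shows "girth_gt (H - Dl n k H) k"
  unfolding girth_gt_def
proof (intro allI impI notI)
  fix l assume lk: "l \<le> k" and hc: "has_berge_cycle (H - Dl n k H) l"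
  from hc obtain e v where l2: "2 \<le> l" and ie: "inj_on e {..<l}" and iv: "inj_on v {..<l}"
    and eH: "\<forall>i<l. e i \<in> H - Dl n k H" and cyc: "\<forall>i<l. v i \<in> e i \<and> v i \<in> e ((i + 1) mod l)"
    unfolding has_berge_cycle_def by blast
  define v' where "v' = restrict v {..<l}"
  define e' where "e' = restrict e {..<l}"
  have "(v', e') \<in> Wit n l H"
    unfolding Wit_def
  proof (clarify, intro conjI)
    show "v' \<in> (\<Pi>\<^sub>E i\<in>{..<l}. {1..n})"
    proof (unfold v'_def, rule restrict_PiE_iff[THEN iffD2], intro ballI)
      fix i assume i: "i \<in> {..<l}"
      have "e i \<in> Ue n a" using eH HU i by auto
      thus "v i \<in> {1..n}" using cyc i unfolding Ue_def by auto
    qed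
    show "e' \<in> (\<Pi>\<^sub>E i\<in>{..<l}. H)" unfolding e'_def using eH by auto
    show "inj_on v' {..<l}" unfolding v'_def using iv by (simp add: inj_on_def)
    show "inj_on e' {..<l}" unfolding e'_def using ie by (simp add: inj_on_def)
    show "\<forall>i<l. v' i \<in> e' i \<and> v' i \<in> e' ((i + 1) mod l)"
      unfolding v'_def e'_def using cyc l2 by auto
  qed
  moreover have "k \<ge> 2" using l2 lk by simp
  ultimately have "e' 0 \<in> Dl n k H" unfolding Dl_def using l2 lk by force
  moreover have "e' 0 = e 0" unfolding e'_def using l2 by simp
  moreover have "e 0 \<notin> Dl n k H" using eH l2 by auto
  ultimately show False by simp
qed



lemma cyc_sum:
  fixes a k L n m K :: nat
  assumes a: "2 \<le> a" and k: "2 \<le> k" and L: "1 \<le> L" and n: "n = L ^ k" and m: "m = n * L"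
    and K: "K = a ^ a" and Nlow: "real n ^ a \<le> real K * real (n choose a)" and Np: "n choose a > 0"
  shows "(\<Sum>H\<in>hyp_family a n m. real (\<Sum>l\<in>{2..k}. card (Wit n l H)))
         \<le> real ((n choose a) choose m) * real k * real K ^ k * real n"
proof -
  define C where "C = real ((n choose a) choose m)"
  define N where "N = real (n choose a)"
  have C0: "C \<ge> 0" unfolding C_def by simp
  have Npos: "N > 0" unfolding N_def using Np by simp
  have np: "real n > 0" unfolding n using L by simp
  have Kp: "real K \<ge> 1" unfolding K using a by simp
  have KL: "real K * real L \<ge> 1" using Kp L by (metis mult_mono' of_nat_1 of_nat_le_iff mult_1 zero_le_one)
  have ratio: "real n ^ (a - 1) * real m / N \<le> real K * real L"
  proof -
    have na: "real n ^ a = real n ^ (a - 1) * real n" using power_minus_mult[of a "real n"] a by simp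
    have "real n ^ (a - 1) * real m = real n ^ a * real L" unfolding m na by simp
    also have "\<dots> \<le> real K * N * real L" unfolding N_def using Nlow by (intro mult_right_mono) auto
    finally show ?thesis using Npos by (simp add: field_simps)
  qed
  have tm: "(\<Sum>H\<in>hyp_family a n m. real (card (Wit n l H))) \<le> C * (real K * real L) ^ k"
    if l: "l \<in> {2..k}" for l
  proof -
    have l2: "2 \<le> l" "l \<le> k" using l by auto
    have "(\<Sum>H\<in>hyp_family a n m. real (card (Wit n l H))) \<le> real (card (Wit n l (Ue n a))) * (C * (real m / N) ^ l)"
      unfolding C_def N_def by (rule Wit_expect[OF l2(1)])
    also have "\<dots> \<le> real (n ^ l * (n ^ (a - 2)) ^ l) * (C * (real m / N) ^ l)"
      by (rule mult_right_mono) (use Wit_card[OF l2(1) a, of n] C0 Npos in \<open>simp_all only: of_nat_le_iff\<close>, simp)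
    also have "\<dots> = C * (real n ^ (a - 1) * real m / N) ^ l"
    proof -
      have "real n * real n ^ (a - 2) = real n ^ (a - 1)"
        using a by (metis Suc_diff_le Suc_1 diff_Suc_Suc power_Suc)
      hence "real (n ^ l * (n ^ (a - 2)) ^ l) = (real n ^ (a - 1)) ^ l"
        by (simp add: power_mult_distrib[symmetric])
      thus ?thesis by (simp add: power_mult_distrib power_divide mult_ac)
    qed
    also have "\<dots> \<le> C * (real K * real L) ^ l"
      by (rule mult_left_mono[OF power_mono[OF ratio]]) (use C0 Npos in auto)
    also have "\<dots> \<le> C * (real K * real L) ^ k"
      by (rule mult_left_mono[OF power_increasing[OF l2(2) KL]]) (use C0 in auto)
    finally show ?thesis .
  qed
  have "(\<Sum>H\<in>hyp_family a n m. real (\<Sum>l\<in>{2..k}. card (Wit n l H)))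
      = (\<Sum>l\<in>{2..k}. \<Sum>H\<in>hyp_family a n m. real (card (Wit n l H)))"
    by (simp add: sum.swap[of _ "hyp_family a n m"])
  also have "\<dots> \<le> (\<Sum>l\<in>{2..k}. C * (real K * real L) ^ k)" by (rule sum_mono) (rule tm)
  also have "\<dots> = real (k - 1) * (C * (real K * real L) ^ k)" by simp
  also have "\<dots> \<le> real k * (C * (real K * real L) ^ k)"
    by (rule mult_right_mono) (use C0 in auto)
  also have "\<dots> = C * real k * real K ^ k * real n" unfolding n by (simp add: power_mult_distrib)
  finally show ?thesis unfolding C_def .
qed

lemma part2:
  fixes \<epsilon> :: real and a b :: nat
  assumes eps: "\<epsilon> > 0" and a: "2 \<le> a" "a \<le> b"
  shows "\<forall>k\<ge>2. \<exists>H :: nat set set. uniform_hypergraph a H \<and> H \<noteq> {} \<and> girth_gt H k \<and>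
            \<not> has_large_rainbow_sub b (rb_const a b * real (card H) * (1 + \<epsilon>)) H"
proof (intro allI impI)
  fix k :: nat assume k: "2 \<le> k"
  define e1 where "e1 = min \<epsilon> 1 / 3"
  define rb where "rb = rb_const a b"
  define \<delta> where "\<delta> = rb * (e1/4)^2"
  define K where "K = a ^ a"
  have e1: "0 < e1" "e1 \<le> 1/3" "3 * e1 \<le> \<epsilon>" unfolding e1_def using eps by auto
  have rbp: "rb > 0" unfolding rb_def using a by (intro rb_pos) auto
  have dp: "\<delta> > 0" unfolding \<delta>_def using rbp e1 by simp
  have bp: "real b > 0" using a by simp
  have K1: "K \<ge> 1" unfolding K_def using a by simp
  obtain N0 where N0: "\<And>n. n \<ge> N0 \<Longrightarrow> a \<le> n \<and> real n ^ a \<le> (1 + e1/4) * fact a * real (n choose a)"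
    using rho_eventually[of "e1/4" a] e1 unfolding eventually_at_top_linorder by auto
  define L where "L = N0 + K + 1 + nat \<lceil>(ln (real b) + 1) / \<delta>\<rceil> + nat \<lceil>2 * real k * real K ^ k / e1\<rceil>"
  have L1: "L \<ge> 1" "L \<ge> N0" "L \<ge> K" unfolding L_def by auto
  have L2: "real L \<ge> (ln (real b) + 1) / \<delta>"
  proof -
    have "(ln (real b) + 1) / \<delta> \<le> real (nat \<lceil>(ln (real b) + 1) / \<delta>\<rceil>)" by linarith
    also have "\<dots> \<le> real L" unfolding L_def by simp
    finally show ?thesis .
  qed
  have L3: "real L > 2 * real k * real K ^ k / e1"
  proof -
    have "2 * real k * real K ^ k / e1 \<le> real (nat \<lceil>2 * real k * real K ^ k / e1\<rceil>)" by linarith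
    also have "\<dots> < real L" unfolding L_def by simp
    finally show ?thesis .
  qed
  define n where "n = L ^ k"
  define m where "m = n * L"
  have nL: "n \<ge> L" unfolding n_def using L1 k by (simp add: self_le_power)
  have rho: "a \<le> n" "real n ^ a \<le> (1 + e1/4) * fact a * real (n choose a)" using N0[of n] nL L1 by auto
  have Np: "n choose a > 0" using rho by simp
  have np: "real n > 0" using nL L1 by simp
  have Nlow: "real n ^ a \<le> real K * real (n choose a)"
  proof -
    have "(real n / real a) ^ a \<le> real (n choose a)" by (rule binomial_ge_n_over_k_pow_k[OF rho(1)])
    hence "real n ^ a / real K \<le> real (n choose a)" unfolding K_def by (simp add: power_divide)
    thus ?thesis using K1 by (simp add: field_simps)
  qed
  have mN: "m \<le> n choose a"
  proof -
    have "K * m \<le> L * m" using L1 by simp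
    also have "\<dots> = L ^ (k + 2)" unfolding m_def n_def by (simp add: power_add power2_eq_square)
    also have "\<dots> \<le> L ^ (k * a)"
    proof (rule power_increasing)
      have "k + 2 \<le> k * 2" using k by simp
      also have "\<dots> \<le> k * a" using a by simp
      finally show "k + 2 \<le> k * a" .
    qed (use L1 in auto)
    also have "\<dots> = n ^ a" unfolding n_def by (simp add: power_mult)
    finally have "real K * real m \<le> real n ^ a" by (metis of_nat_le_iff of_nat_mult of_nat_power)
    also have "\<dots> \<le> real K * real (n choose a)" by (rule Nlow)
    finally have "real m \<le> real (n choose a)" using K1 by simp
    thus ?thesis by simp
  qed
  define C where "C = real ((n choose a) choose m)"
  have Cp: "C > 0" unfolding C_def using mN by simp
  define fam where "fam = hyp_family a n m"
  have ffam: "finite fam" unfolding fam_def hyp_family_Ue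
    by (rule finite_subset[of _ "Pow (Ue n a)"]) (use Ue_finite in auto)
  have cfam: "card fam = (n choose a) choose m" unfolding fam_def hyp_family_Ue using n_subsets[OF Ue_finite] Ue_card by simp
  define Wt where "Wt = (\<lambda>H. \<Sum>l\<in>{2..k}. card (Wit n l H))"
  define Bad1 where "Bad1 = {H \<in> fam. has_large_rainbow_sub b (rb * (1 + e1) * real m) H}"
  define Bad2 where "Bad2 = {H \<in> fam. real (Wt H) \<ge> e1 * real m}"
  have B1: "real (card Bad1) < C / 2"
  proof -
    have "real (card Bad1) \<le> C * real b ^ n * exp (- rb_const a b * (e1/4)^2 * real m)"
      unfolding Bad1_def fam_def C_def rb_def
      by (rule bad_rainbow_bound) (use a e1 rho Np in auto)
    also have "\<dots> = C * real b ^ n * exp (- \<delta> * real m)" unfolding \<delta>_def rb_def by simp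
    finally have c1: "real (card Bad1) \<le> C * real b ^ n * exp (- \<delta> * real m)" .
    have "real b ^ n * exp (- \<delta> * real m) < 1 / 2"
    proof -
      have ee: "\<delta> * real m = real n * (\<delta> * real L)" unfolding m_def by simp
      have hh: "\<delta> * real L \<ge> ln (real b) + 1" using L2 dp by (simp add: field_simps)
      have "real n * (ln (real b) + 1) \<le> real n * (\<delta> * real L)" by (rule mult_left_mono[OF hh]) simp
      hence dm: "\<delta> * real m \<ge> real n * (ln (real b) + 1)" using ee by linarith
      have bn: "real b ^ n = exp (real n * ln (real b))" using bp by (simp add: exp_of_nat_mult)
      have "real b ^ n * exp (- \<delta> * real m) = exp (real n * ln (real b) - \<delta> * real m)"
        unfolding bn by (simp add: exp_diff exp_minus field_simps)
      also have "\<dots> \<le> exp (- 2)"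
      proof -
        have "L \<ge> K + 1" unfolding L_def by simp
        hence "n \<ge> 2" using nL K1 by linarith
        hence "real n \<ge> 2" by simp
        thus ?thesis using dm by (simp add: algebra_simps)
      qed
      also have "\<dots> < 1 / 2"
      proof -
        have "exp (2::real) \<ge> 1 + 2" by (rule exp_ge_add_one_self)
        thus ?thesis by (simp add: exp_minus field_simps)
      qed
      finally show ?thesis .
    qed
    hence "C * (real b ^ n * exp (- \<delta> * real m)) < C * (1/2)" using Cp by simp
    thus ?thesis using c1 by (simp add: mult.assoc)
  qed
  have B2: "real (card Bad2) < C / 2"
  proof -
    have mp: "e1 * real m > 0" unfolding m_def using e1 np L1 by simp
    have "real (card Bad2) * (e1 * real m) = (\<Sum>H\<in>Bad2. e1 * real m)" by simp
    also have "\<dots> \<le> (\<Sum>H\<in>Bad2. real (Wt H))" by (rule sum_mono) (simp add: Bad2_def)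
    also have "\<dots> \<le> (\<Sum>H\<in>fam. real (Wt H))" by (rule sum_mono2[OF ffam]) (auto simp: Bad2_def)
    also have "\<dots> \<le> C * real k * real K ^ k * real n"
      unfolding fam_def Wt_def C_def by (rule cyc_sum[OF a(1) k L1(1) n_def m_def K_def Nlow Np])
    also have "\<dots> < C / 2 * (e1 * real m)"
    proof -
      have "2 * real k * real K ^ k < e1 * real L" using L3 e1 by (simp add: field_simps)
      hence "C * (2 * real k * real K ^ k) * real n < C * (e1 * real L) * real n"
        using Cp np by simp
      thus ?thesis unfolding m_def by (simp add: field_simps)
    qed
    finally have X: "real (card Bad2) * (e1 * real m) < C / 2 * (e1 * real m)" .
    show ?thesis by (rule mult_right_less_imp_less[OF X]) (use mp in simp)
  qed
  have lt: "card (Bad1 \<union> Bad2) < card fam"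
  proof -
    have "real (card (Bad1 \<union> Bad2)) \<le> real (card Bad1) + real (card Bad2)"
      using card_Un_le[of Bad1 Bad2] by linarith
    also have "\<dots> < C" using B1 B2 by simp
    also have "C = real (card fam)" unfolding C_def cfam ..
    finally show ?thesis by simp
  qed
  have finB: "finite (Bad1 \<union> Bad2)" by (rule finite_subset[OF _ ffam]) (unfold Bad1_def Bad2_def, blast)
  have "\<not> fam \<subseteq> Bad1 \<union> Bad2"
  proof
    assume "fam \<subseteq> Bad1 \<union> Bad2"
    hence "card fam \<le> card (Bad1 \<union> Bad2)" by (rule card_mono[OF finB])
    thus False using lt by simp
  qed
  then obtain H where H: "H \<in> fam" "H \<notin> Bad1" "H \<notin> Bad2" by blast
  have HU: "H \<subseteq> Ue n a" and Hm: "card H = m" using H(1) unfolding fam_def hyp_family_Ue by auto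
  have fH: "finite H" by (rule finite_subset[OF HU Ue_finite])
  define H' where "H' = H - Dl n k H"
  have WtH: "real (Wt H) < e1 * real m" using H unfolding Bad2_def by auto
  have cD: "real (card (Dl n k H)) < e1 * real m"
    using Dl_card[OF fH, of n k] WtH unfolding Wt_def by linarith
  have cH': "real (card H') > (1 - e1) * real m"
  proof -
    have "card H \<le> card H' + card (Dl n k H)"
    proof -
      have "H \<subseteq> (H - Dl n k H) \<union> Dl n k H" by auto
      hence "card H \<le> card ((H - Dl n k H) \<union> Dl n k H)"
        by (rule card_mono[rotated]) (use fH Wit_finite[OF fH] in \<open>auto simp: Dl_def\<close>)
      also have "\<dots> \<le> card (H - Dl n k H) + card (Dl n k H)" by (rule card_Un_le)
      finally show ?thesis unfolding H'_def .
    qed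
    hence "real m \<le> real (card H') + real (card (Dl n k H))" using Hm by linarith
    thus ?thesis using cD by (simp add: algebra_simps)
  qed
  have m0: "real m > 0" unfolding m_def using np L1 by simp
  show "\<exists>H :: nat set set. uniform_hypergraph a H \<and> H \<noteq> {} \<and> girth_gt H k \<and>
            \<not> has_large_rainbow_sub b (rb_const a b * real (card H) * (1 + \<epsilon>)) H"
  proof (intro exI conjI)
    show "uniform_hypergraph a H'" unfolding uniform_hypergraph_def H'_def using fH HU
      by (auto simp: Ue_def intro: finite_subset)
    have "(1 - e1) * real m > 0" using e1 m0 by simp
    hence "card H' > 0" using cH' by linarith
    thus "H' \<noteq> {}" by auto
    show "girth_gt H' k" unfolding H'_def by (rule girth_del[OF HU])
    show "\<not> has_large_rainbow_sub b (rb_const a b * real (card H') * (1 + \<epsilon>)) H'"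
    proof
      assume "has_large_rainbow_sub b (rb_const a b * real (card H') * (1 + \<epsilon>)) H'"
      moreover have "rb * (1 + e1) * real m \<le> rb_const a b * real (card H') * (1 + \<epsilon>)"
      proof -
        have "(1 + e1) \<le> (1 - e1) * (1 + \<epsilon>)"
        proof -
          have "(1 - e1) * (1 + 3 * e1) \<le> (1 - e1) * (1 + \<epsilon>)" using e1 by (intro mult_left_mono) auto
          moreover have "1 + e1 \<le> (1 - e1) * (1 + 3 * e1)" using e1 by (simp add: algebra_simps power2_eq_square)
          ultimately show ?thesis by linarith
        qed
        hence "(1 + e1) * real m \<le> ((1 - e1) * (1 + \<epsilon>)) * real m" using m0
          by (intro mult_right_mono) auto
        also have "\<dots> = (1 - e1) * real m * (1 + \<epsilon>)" by (simp only: mult_ac)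
        also have "\<dots> \<le> real (card H') * (1 + \<epsilon>)" using cH' eps by (intro mult_right_mono) auto
        finally have "(1 + e1) * real m \<le> real (card H') * (1 + \<epsilon>)" .
        hence "rb * ((1 + e1) * real m) \<le> rb * (real (card H') * (1 + \<epsilon>))"
          using rbp by (intro mult_left_mono) auto
        thus ?thesis unfolding rb_def by (simp only: mult.assoc)
      qed
      ultimately have "has_large_rainbow_sub b (rb * (1 + e1) * real m) H'" by (rule has_large_mono)
      then obtain F where "F \<subseteq> H'" "rainbow_colorable b F" "real (card F) > rb * (1 + e1) * real m"
        unfolding has_large_rainbow_sub_def by blast
      moreover have "H' \<subseteq> H" unfolding H'_def by auto
      ultimately have "has_large_rainbow_sub b (rb * (1 + e1) * real m) H"
        unfolding has_large_rainbow_sub_def by (meson order_trans)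
      thus False using H unfolding Bad1_def by auto
    qed
  qed
qed


theorem proposition16:
  fixes \<epsilon> :: real and a b :: nat
  assumes "\<epsilon> > 0" and "2 \<le> a" and "a \<le> b"
  shows "(\<forall>m :: nat \<Rightarrow> nat. filterlim (\<lambda>n. real (m n) / real n) at_top at_top \<longrightarrow>
            ((\<lambda>n. real (card {H \<in> hyp_family a n (m n).
                    has_large_rainbow_sub b (rb_const a b * real (card H) * (1 + \<epsilon>)) H})
                  / real ((n choose a) choose (m n)))
             \<longlonglongrightarrow> 0))
       \<and> (\<forall>k\<ge>2. \<exists>H :: nat set set. uniform_hypergraph a H \<and> H \<noteq> {} \<and> girth_gt H k \<and>
            \<not> has_large_rainbow_sub b (rb_const a b * real (card H) * (1 + \<epsilon>)) H)"
  using part1[OF assms] part2[OF assms] by blast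

end
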